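(* Let $\mathcal{S}$ be a state space, let $\mathcal{A}\subset\mathbb{R}^d$ be an action space of finite positive Lebesgue measure, let $R:\mathcal{S}\times\mathcal{A}\to\mathbb{R}$ be a reward function, let $\tau(\cdot\mid s,a)$ be a transition kernel, and let $\gamma\in(0,1)$ and $\tilde{\alpha}>0$. Let $\mathcal{Q}$ be a probability distribution over (measurable) functions $Q:\mathcal{S}\times\mathcal{A}\to\mathbb{R}$ such that for every state-action pair $(s,a)$ the random variable $Q(s,a)$, $Q\sim\mathcal{Q}$, has bounded support and is sub-Gaussian with mean $\mu(s,a)$ and variance proxy $\sigma^2(s,a)$. Define the (one-step distributional soft) Bellman optimality backup, for a given next state $s'\sim\tau(\cdot\mid s,a)$, by $$\mathcal{T}^{*}Q(s,a)=R(s,a)+\gamma\,\mathbb{E}_{Q\sim\mathcal{Q}}\Big[\tilde{\alpha}\log\Big(\int_{\mathcal{A}}\exp\big(\tilde{\alpha}^{-1}Q(s',a')\big)\,da'\Big)\Big].$$ Then for every $(s,a)$ and every next state $s'$, $$\mathcal{T}^{*}Q(s,a)\le R(s,a)+\gamma\,\tilde{\alpha}\log\Big(\int_{\mathcal{A}}\exp\Big(\tilde{\alpha}^{-1}\mu(s',a')+\tfrac12\tilde{\alpha}^{-2}\sigma^2(s',a')\Big)\,da'\Big).$$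
   Context: A real random variable $X$ with mean $\mu=\mathbb{E}[X]$ is called sub-Gaussian with variance proxy $\sigma^2$ if $\mathbb{E}[\exp(\lambda X)]\le\exp(\lambda\mu+\tfrac12\lambda^2\sigma^2)$ for all $\lambda\in\mathbb{R}$. The functions $\mu(s,a)=\mathbb{E}_{Q\sim\mathcal{Q}}[Q(s,a)]$ and $\sigma^2(s,a)$ are assumed measurable in $a$. *)

theory Defs
  imports "HOL-Probability.Probability"
begin

definition subgaussian :: "'w measure \<Rightarrow> ('w \<Rightarrow> real) \<Rightarrow> real \<Rightarrow> bool" where
  "subgaussian M X v \<longleftrightarrow>
     (\<forall>l::real. (\<integral>\<omega>. exp (l * X \<omega>) \<partial>M) \<le> exp (l * (\<integral>\<omega>. X \<omega> \<partial>M) + l\<^sup>2 * v / 2))"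

text \<open>Mean function mu(s,a) = E_{Q ~ Q-distribution}[Q(s,a)]. The distribution over
Q-functions is represented by a probability space M and a random Q-function Q omega.\<close>
definition qmean :: "'w measure \<Rightarrow> ('w \<Rightarrow> 's \<Rightarrow> 'a \<Rightarrow> real) \<Rightarrow> 's \<Rightarrow> 'a \<Rightarrow> real" where
  "qmean M Q s a = (\<integral>\<omega>. Q \<omega> s a \<partial>M)"

definition soft_backup ::
  "'w measure \<Rightarrow> ('w \<Rightarrow> 's \<Rightarrow> 'a::euclidean_space \<Rightarrow> real) \<Rightarrow> ('s \<Rightarrow> 'a \<Rightarrow> real)
    \<Rightarrow> real \<Rightarrow> real \<Rightarrow> 'a set \<Rightarrow> 's \<Rightarrow> 'a \<Rightarrow> 's \<Rightarrow> real" where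
  "soft_backup M Q R \<gamma> \<alpha> A s a s' =
     R s a + \<gamma> * (\<integral>\<omega>. \<alpha> * ln (set_lebesgue_integral lborel A (\<lambda>a'. exp (Q \<omega> s' a' / \<alpha>))) \<partial>M)"

end

theory Submission
  imports Defs
begin

theorem theorem1:
  fixes M :: "'w measure"
    and Q :: "'w \<Rightarrow> 's \<Rightarrow> real ^ 'd \<Rightarrow> real"
    and A :: "(real ^ 'd) set"
    and R :: "'s \<Rightarrow> real ^ 'd \<Rightarrow> real"
    and \<sigma>2 :: "'s \<Rightarrow> real ^ 'd \<Rightarrow> real"
    and \<gamma> \<alpha> :: real
    and s s' :: 's and a :: "real ^ 'd"
  assumes A_meas: "A \<in> sets lborel"
    and A_pos: "0 < emeasure lborel A" and A_fin: "emeasure lborel A < \<infinity>"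
    and gamma: "0 < \<gamma>" "\<gamma> < 1"
    and alpha: "0 < \<alpha>"
    and M: "prob_space M"
    and Q_meas: "\<And>t. (\<lambda>(\<omega>, x). Q \<omega> t x) \<in> borel_measurable (M \<Otimes>\<^sub>M lborel)"
    and Q_bdd: "\<And>t x. \<exists>B. AE \<omega> in M. \<bar>Q \<omega> t x\<bar> \<le> B"
    and Q_subg: "\<And>t x. subgaussian M (\<lambda>\<omega>. Q \<omega> t x) (\<sigma>2 t x)"
    and sigma_meas: "\<And>t. \<sigma>2 t \<in> borel_measurable lborel"
    and backup_welldef: "integrable M (\<lambda>\<omega>. ln (set_lebesgue_integral lborel A (\<lambda>a'. exp (Q \<omega> s' a' / \<alpha>))))"
    and rhs_finite: "set_integrable lborel A
          (\<lambda>a'. exp (qmean M Q s' a' / \<alpha> + (1/2) * \<alpha> powi (-2) * \<sigma>2 s' a'))"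
  shows "soft_backup M Q R \<gamma> \<alpha> A s a s'
    \<le> R s a + \<gamma> * \<alpha> * ln (set_lebesgue_integral lborel A
          (\<lambda>a'. exp (qmean M Q s' a' / \<alpha> + (1/2) * \<alpha> powi (-2) * \<sigma>2 s' a')))"
proof -
  interpret P: prob_space M by (rule M)
  interpret PS: pair_sigma_finite M lborel
    by (simp add: pair_sigma_finite_def P.sigma_finite_measure_axioms lborel.sigma_finite_measure_axioms)
  define F where "F = (\<lambda>\<omega>. set_lebesgue_integral lborel A (\<lambda>a'. exp (Q \<omega> s' a' / \<alpha>)))"
  define G where "G = (\<lambda>a'. exp (qmean M Q s' a' / \<alpha> + (1/2) * \<alpha> powi (-2) * \<sigma>2 s' a'))"
  define h where "h = (\<lambda>\<omega> x. ennreal (indicator A x * exp (Q \<omega> s' x / \<alpha>)))"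
  have Qm: "(\<lambda>(\<omega>, x). Q \<omega> s' x) \<in> borel_measurable (M \<Otimes>\<^sub>M lborel)" by (rule Q_meas)
  have Am[measurable]: "A \<in> sets lborel" by (rule A_meas)
  have hm: "case_prod h \<in> borel_measurable (M \<Otimes>\<^sub>M lborel)"
  proof -
    have "(\<lambda>p. ennreal (indicator A (snd p) * exp ((\<lambda>(\<omega>, x). Q \<omega> s' x) p / \<alpha>))) \<in> borel_measurable (M \<Otimes>\<^sub>M lborel)"
      using Qm by measurable
    then show ?thesis unfolding h_def by (simp add: case_prod_beta')
  qed
  have Qx: "(\<lambda>\<omega>. Q \<omega> s' x) \<in> borel_measurable M" for x
  proof -
    have "(\<lambda>\<omega>. (\<omega>, x)) \<in> measurable M (M \<Otimes>\<^sub>M lborel)" by measurable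
    from measurable_compose[OF this Qm] show ?thesis by simp
  qed
  have Qy: "(\<lambda>x. Q \<omega> s' x) \<in> borel_measurable lborel" if "\<omega> \<in> space M" for \<omega>
  proof -
    have "(\<lambda>x. (\<omega>, x)) \<in> measurable lborel (M \<Otimes>\<^sub>M lborel)" using that by measurable
    from measurable_compose[OF this Qm] show ?thesis by simp
  qed
  have Ginteg: "integrable lborel (\<lambda>x. indicator A x * G x)"
    using rhs_finite unfolding set_integrable_def G_def by simp
  have Gpos: "0 \<le> G x" for x unfolding G_def by simp
  have pw: "(\<integral>\<^sup>+\<omega>. h \<omega> x \<partial>M) \<le> ennreal (indicator A x * G x)" for x
  proof (cases "x \<in> A")
    case False
    then show ?thesis unfolding h_def by simp
  next
    case True
    obtain B where B: "AE \<omega> in M. \<bar>Q \<omega> s' x\<bar> \<le> B" using Q_bdd by blast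
    have int: "integrable M (\<lambda>\<omega>. exp (Q \<omega> s' x / \<alpha>))"
    proof (rule P.integrable_const_bound[where B="exp (B / \<alpha>)"])
      show "AE \<omega> in M. norm (exp (Q \<omega> s' x / \<alpha>)) \<le> exp (B / \<alpha>)"
        using B by eventually_elim (use alpha in \<open>auto simp: divide_right_mono\<close>)
      show "(\<lambda>\<omega>. exp (Q \<omega> s' x / \<alpha>)) \<in> borel_measurable M" using Qx[of x] by measurable
    qed
    have sg: "(\<integral>\<omega>. exp ((1/\<alpha>) * Q \<omega> s' x) \<partial>M) \<le> exp ((1/\<alpha>) * (\<integral>\<omega>. Q \<omega> s' x \<partial>M) + (1/\<alpha>)\<^sup>2 * \<sigma>2 s' x / 2)"
      using Q_subg[of s' x] unfolding subgaussian_def by blast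
    have eq: "(1/\<alpha>) * (\<integral>\<omega>. Q \<omega> s' x \<partial>M) + (1/\<alpha>)\<^sup>2 * \<sigma>2 s' x / 2
        = qmean M Q s' x / \<alpha> + (1/2) * \<alpha> powi (-2) * \<sigma>2 s' x"
      unfolding qmean_def by (simp add: power_int_minus field_simps power2_eq_square)
    have "(\<integral>\<^sup>+\<omega>. h \<omega> x \<partial>M) = (\<integral>\<^sup>+\<omega>. ennreal (exp (Q \<omega> s' x / \<alpha>)) \<partial>M)"
      unfolding h_def using True by simp
    also have "\<dots> = ennreal (\<integral>\<omega>. exp (Q \<omega> s' x / \<alpha>) \<partial>M)"
      using int by (intro nn_integral_eq_integral) auto
    also have "\<dots> \<le> ennreal (G x)"
      using sg eq unfolding G_def by (intro ennreal_leI) simp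
    finally show ?thesis using True by simp
  qed
  have "(\<integral>\<^sup>+\<omega>. (\<integral>\<^sup>+x. h \<omega> x \<partial>lborel) \<partial>M) = (\<integral>\<^sup>+x. (\<integral>\<^sup>+\<omega>. h \<omega> x \<partial>M) \<partial>lborel)"
    using PS.Fubini'[OF hm] by simp
  also have "\<dots> \<le> (\<integral>\<^sup>+x. ennreal (indicator A x * G x) \<partial>lborel)"
    by (intro nn_integral_mono pw)
  also have "\<dots> = ennreal (\<integral>x. indicator A x * G x \<partial>lborel)"
    using Ginteg Gpos by (intro nn_integral_eq_integral) auto
  finally have tot: "(\<integral>\<^sup>+\<omega>. (\<integral>\<^sup>+x. h \<omega> x \<partial>lborel) \<partial>M) \<le> ennreal (\<integral>x. indicator A x * G x \<partial>lborel)" .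
  have Gint_nn: "0 \<le> (\<integral>x. indicator A x * G x \<partial>lborel)"
    using Gpos by (simp add: integral_nonneg)
  have hnm: "(\<lambda>\<omega>. \<integral>\<^sup>+x. h \<omega> x \<partial>lborel) \<in> borel_measurable M"
    using lborel.borel_measurable_nn_integral[OF hm] .
  have fin: "AE \<omega> in M. (\<integral>\<^sup>+x. h \<omega> x \<partial>lborel) \<noteq> \<infinity>"
    using tot by (intro nn_integral_PInf_AE hnm) (auto simp: top_unique)
  have Fm: "F \<in> borel_measurable M"
  proof -
    have "case_prod (\<lambda>\<omega> x. indicator A x *\<^sub>R exp (Q \<omega> s' x / \<alpha>)) \<in> borel_measurable (M \<Otimes>\<^sub>M lborel)"
    proof -
      have "(\<lambda>p. indicator A (snd p) *\<^sub>R exp ((\<lambda>(\<omega>, x). Q \<omega> s' x) p / \<alpha>)) \<in> borel_measurable (M \<Otimes>\<^sub>M lborel)"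
        using Qm by measurable
      then show ?thesis by (simp add: case_prod_beta')
    qed
    from lborel.borel_measurable_lebesgue_integral[OF this] show ?thesis
      unfolding F_def set_lebesgue_integral_def .
  qed
  have Feq: "F \<omega> = enn2real (\<integral>\<^sup>+x. h \<omega> x \<partial>lborel)" if "\<omega> \<in> space M" for \<omega>
  proof -
    have "F \<omega> = (\<integral>x. indicator A x * exp (Q \<omega> s' x / \<alpha>) \<partial>lborel)"
      unfolding F_def set_lebesgue_integral_def by simp
    also have "\<dots> = enn2real (\<integral>\<^sup>+x. h \<omega> x \<partial>lborel)"
      unfolding h_def using Qy[OF that] by (intro integral_eq_nn_integral) auto
    finally show ?thesis .
  qed
  have hnz: "(\<integral>\<^sup>+x. h \<omega> x \<partial>lborel) \<noteq> 0" if "\<omega> \<in> space M" for \<omega>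
  proof
    assume "(\<integral>\<^sup>+x. h \<omega> x \<partial>lborel) = 0"
    then have "AE x in lborel. h \<omega> x = 0"
      using Qy[OF that] unfolding h_def by (subst (asm) nn_integral_0_iff_AE) auto
    then have "AE x in lborel. x \<notin> A"
      unfolding h_def by eventually_elim (auto simp: indicator_def split: if_splits)
    then have "emeasure lborel A = 0"
      using AE_iff_measurable[OF A_meas, of "\<lambda>x. x \<notin> A"] by auto
    then show False using A_pos by simp
  qed
  have Fpos: "AE \<omega> in M. 0 < F \<omega>"
    using fin AE_space
  proof eventually_elim
    case (elim \<omega>)
    then show ?case using Feq[of \<omega>] hnz[of \<omega>]
      by (simp add: enn2real_positive_iff less_top zero_less_iff_neq_zero)
  qed
  have Fnn: "0 \<le> F \<omega>" if "\<omega> \<in> space M" for \<omega>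
    using Feq[OF that] by simp
  have nnF: "(\<integral>\<^sup>+\<omega>. ennreal (F \<omega>) \<partial>M) = (\<integral>\<^sup>+\<omega>. (\<integral>\<^sup>+x. h \<omega> x \<partial>lborel) \<partial>M)"
    using fin AE_space
    by (intro nn_integral_cong_AE, eventually_elim) (simp add: Feq less_top)
  have nnF_fin: "(\<integral>\<^sup>+\<omega>. ennreal (F \<omega>) \<partial>M) < \<infinity>"
    using nnF tot by (simp add: le_less_trans)
  have Fint: "integrable M F"
    using Fm Fnn nnF_fin by (intro integrableI_nonneg) (auto intro: AE_I2)
  have EF: "(\<integral>\<omega>. F \<omega> \<partial>M) \<le> (\<integral>x. indicator A x * G x \<partial>lborel)"
  proof -
    have "(\<integral>\<omega>. F \<omega> \<partial>M) = enn2real (\<integral>\<^sup>+\<omega>. ennreal (F \<omega>) \<partial>M)"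
      using Fm Fnn by (intro integral_eq_nn_integral) (auto intro: AE_I2)
    also have "\<dots> \<le> enn2real (ennreal (\<integral>x. indicator A x * G x \<partial>lborel))"
      using nnF tot by (intro enn2real_mono) auto
    also have "\<dots> = (\<integral>x. indicator A x * G x \<partial>lborel)" using Gint_nn by simp
    finally show ?thesis .
  qed
  have EFpos: "0 < (\<integral>\<omega>. F \<omega> \<partial>M)"
    by (rule P.expectation_greater[OF Fint Fpos])
  have lnF_int: "integrable M (\<lambda>\<omega>. ln (F \<omega>))" using backup_welldef unfolding F_def .
  have jen: "- ln (\<integral>\<omega>. F \<omega> \<partial>M) \<le> (\<integral>\<omega>. - ln (F \<omega>) \<partial>M)"
  proof (rule P.jensens_inequality[where I="{0<..}" and a=0 and b=0])
    show "AE \<omega> in M. F \<omega> \<in> {0<..}" using Fpos by simp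
    show "integrable M (\<lambda>\<omega>. - ln (F \<omega>))" using lnF_int by simp
    show "convex_on {0<..} (\<lambda>x. - ln x)"
      using ln_concave unfolding concave_on_def by simp
  qed (use Fint in auto)
  then have j2: "(\<integral>\<omega>. ln (F \<omega>) \<partial>M) \<le> ln (\<integral>\<omega>. F \<omega> \<partial>M)" by simp
  also have "\<dots> \<le> ln (\<integral>x. indicator A x * G x \<partial>lborel)"
    using EF EFpos by simp
  finally have key: "(\<integral>\<omega>. ln (F \<omega>) \<partial>M) \<le> ln (set_lebesgue_integral lborel A G)"
    unfolding set_lebesgue_integral_def by simp
  have "soft_backup M Q R \<gamma> \<alpha> A s a s' = R s a + \<gamma> * (\<alpha> * (\<integral>\<omega>. ln (F \<omega>) \<partial>M))"
    unfolding soft_backup_def F_def by simp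
  also have "\<dots> \<le> R s a + \<gamma> * (\<alpha> * ln (set_lebesgue_integral lborel A G))"
    using key gamma alpha by (simp add: mult_left_mono)
  finally show ?thesis unfolding G_def by (simp add: mult.assoc)
qed

end
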